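(* $\mathrm{nM}([2]) = \mathrm{nM}(\mathrm{N}) = \mathrm{N}$, where $[2]$ denotes the function $f : \mathbb{N} \to \mathbb{N}\cup\{+\infty\}$ with $f(1) = 2$ and $f(k) = +\infty$ for $k \ge 2$.
   Context: $\mathrm{N} : \mathbb{N} \to \mathbb{N}$ is defined by $\mathrm{N}(1) = 2$ and $\mathrm{N}(k) = \max_{i \in \{2,\dots,k\}} \min(2i, \mathrm{N}(k-i+1)+i)$ for $k \ge 2$. For a function $g : \mathbb{N} \to \mathbb{N} \cup \{+\infty\}$ and $k \ge 2$, $m \ge 4$, let $\mathrm{pdp}_g(k,m)$ be the set of pairs $(e_0,e_1) \in \mathbb{N}^2$ with (i) $e_0, e_1 \ge 2$; (ii) $e_0, e_1 \le k$; (iii) $e_0 + e_1 = m$; (iv) $e_0 \le e_1$; (v) $g(k - e_\varepsilon + 1) + e_\varepsilon \ge m$ for both $\varepsilon \in \{0,1\}$ (this only depends on the values $g(k')$ for $k' < k$). For $f : \mathbb{N} \to \mathbb{N} \cup \{+\infty\}$ with $f(1) = 2$, the function $f' = \mathrm{nM}(f)$ is defined recursively: $f'(1) = 2$, and for $k > 1$, with $m$ the largest integer in $\{4, \dots, 2k\}$ such that $\mathrm{pdp}_{f'}(k,m) \ne \emptyset$ (using the already defined values $f'(k')$, $k' < k$; note $(2,2) \in \mathrm{pdp}_{f'}(k,4)$), set $f'(k) = \min(m, f(k))$. *)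

theory Defs
  imports Main "HOL-Library.Extended_Nat"
begin

text \<open>Natural numbers here are the positive integers; functions are of type
  nat => nat or nat => enat and only their values at arguments >= 1 matter.
  enat is the type of natural numbers extended with infinity.\<close>

function N :: "nat \<Rightarrow> nat" where
  "N k = (if k \<le> 1 then 2
          else Max ((\<lambda>i. min (2 * i) (N (k - i + 1) + i)) ` {2..k}))"
  by auto
termination
  by (relation "measure id") auto

definition pdp :: "(nat \<Rightarrow> enat) \<Rightarrow> nat \<Rightarrow> nat \<Rightarrow> (nat \<times> nat) set" where
  "pdp g k m = {(e0, e1). 2 \<le> e0 \<and> 2 \<le> e1 \<and> e0 \<le> k \<and> e1 \<le> k \<and> e0 + e1 = m
      \<and> e0 \<le> e1
      \<and> g (k - e0 + 1) + enat e0 \<ge> enat m \<and> g (k - e1 + 1) + enat e1 \<ge> enat m}"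

text \<open>nM_tab f k is a table whose entries at 1..k are the values f'(1),...,f'(k)
  of f' = nM f (entries at other arguments are irrelevant).\<close>
fun nM_tab :: "(nat \<Rightarrow> enat) \<Rightarrow> nat \<Rightarrow> (nat \<Rightarrow> enat)" where
  "nM_tab f 0 = (\<lambda>_. 2)"
| "nM_tab f (Suc k) =
     (if Suc k = 1 then (nM_tab f k)(1 := 2)
      else (nM_tab f k)(Suc k :=
        min (enat (GREATEST m. m \<in> {4..2 * Suc k} \<and> pdp (nM_tab f k) (Suc k) m \<noteq> {}))
            (f (Suc k))))"

definition nM :: "(nat \<Rightarrow> enat) \<Rightarrow> (nat \<Rightarrow> enat)" where
  "nM f k = nM_tab f k k"

definition two_fun :: "nat \<Rightarrow> enat" where
  "two_fun k = (if k \<le> 1 then 2 else \<infinity>)"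

end

theory Submission
  imports Defs
begin

declare N.simps[simp del]

lemma N_eq: "k \<ge> 2 \<Longrightarrow> N k = Max ((\<lambda>i. min (2 * i) (N (k - i + 1) + i)) ` {2..k})"
  by (subst N.simps) simp

lemma N_one: "N 1 = 2" by (subst N.simps) simp

lemma N_ge: assumes "k \<ge> 2" "i \<in> {2..k}" shows "min (2 * i) (N (k - i + 1) + i) \<le> N k"
  using assms by (simp add: N_eq del: min_le_iff_disj)

lemma N_ex: assumes "k \<ge> 2" shows "\<exists>i\<in>{2..k}. N k = min (2 * i) (N (k - i + 1) + i)"
proof -
  have "Max ((\<lambda>i. min (2 * i) (N (k - i + 1) + i)) ` {2..k}) \<in> (\<lambda>i. min (2 * i) (N (k - i + 1) + i)) ` {2..k}"
    using assms by (intro Max_in) auto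
  then show ?thesis using N_eq[OF assms] by auto
qed

lemma N_ge2: "N k \<ge> 2"
proof (cases "k \<ge> 2")
  case True
  then obtain i where "i\<in>{2..k}" "N k = min (2 * i) (N (k - i + 1) + i)" using N_ex by blast
  then show ?thesis by auto
next
  case False then show ?thesis by (subst N.simps) simp
qed

lemma N_Suc: assumes "k \<ge> 1" shows "N (Suc k) \<ge> N k + 1"
proof (cases "k = 1")
  case True
  have "N 2 \<ge> min (2*2) (N (2 - 2 + 1) + 2)" by (rule N_ge) auto
  then show ?thesis using True N_one by (simp add: numeral_2_eq_2)
next
  case False
  then have k2: "k \<ge> 2" using assms by simp
  then obtain i where i: "i\<in>{2..k}" "N k = min (2 * i) (N (k - i + 1) + i)" using N_ex by blast
  have "min (2 * (i+1)) (N (Suc k - (i+1) + 1) + (i+1)) \<le> N (Suc k)"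
    by (rule N_ge) (use i in auto)
  moreover have "Suc k - (i+1) + 1 = k - i + 1" using i by auto
  ultimately show ?thesis using i by simp
qed

lemma N_add: "a \<ge> 1 \<Longrightarrow> N (a + d) \<ge> N a + d"
proof (induction d)
  case 0 then show ?case by simp
next
  case (Suc d)
  then have "N (Suc (a + d)) \<ge> N (a + d) + 1" by (intro N_Suc) simp
  with Suc show ?case by simp
qed

lemma N_ge4: assumes "k \<ge> 2" shows "N k \<ge> 4"
proof -
  have "min (2*2) (N (k - 2 + 1) + 2) \<le> N k" by (rule N_ge) (use assms in auto)
  moreover have "N (k - 2 + 1) \<ge> 2" by (rule N_ge2)
  ultimately show ?thesis by linarith
qed

lemma greatest_N:
  assumes k: "k \<ge> 2"
  shows "(GREATEST m. m \<in> {4..2 * k} \<and> pdp (\<lambda>j. enat (N j)) k m \<noteq> {}) = N k"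
proof (rule Greatest_equality)
  obtain i where i: "i\<in>{2..k}" "N k = min (2 * i) (N (k - i + 1) + i)" using N_ex k by blast
  define e0 where "e0 = N k - i"
  have ge: "N k \<ge> i + 2" using i N_ge2[of "k - i + 1"] by auto
  have le: "N k \<le> 2 * i" using i by simp
  have c1: "N (k - i + 1) + i \<ge> N k" using i by simp
  have "N (k - i + 1 + (i - e0)) \<ge> N (k - i + 1) + (i - e0)" by (rule N_add) simp
  moreover have "k - i + 1 + (i - e0) = k - e0 + 1" using i ge le e0_def by auto
  ultimately have "N (k - e0 + 1) \<ge> N (k - i + 1) + (i - e0)" by simp
  then have c0: "N (k - e0 + 1) + e0 \<ge> N k" using c1 e0_def ge le by linarith
  have a: "2 \<le> e0" "e0 \<le> i" "e0 + i = N k" "i \<le> k" "2 \<le> i" using ge le e0_def i by auto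
  have "(e0, i) \<in> pdp (\<lambda>j. enat (N j)) k (N k)"
    unfolding pdp_def using a c0 c1
    by (simp add: plus_enat_simps(1)[symmetric] del: plus_enat_simps)
      (metis a(1) a(2) a(3) a(4) order.trans plus_enat_simps(1) enat_ord_simps(1))
  then show "N k \<in> {4..2 * k} \<and> pdp (\<lambda>j. enat (N j)) k (N k) \<noteq> {}"
    using N_ge4[OF k] le i by auto
next
  fix m assume "m \<in> {4..2 * k} \<and> pdp (\<lambda>j. enat (N j)) k m \<noteq> {}"
  then obtain e0 e1 where p: "(e0, e1) \<in> pdp (\<lambda>j. enat (N j)) k m" by auto
  then have h: "2 \<le> e0" "e1 \<le> k" "e0 \<le> e1" "e0 + e1 = m" "N (k - e1 + 1) + e1 \<ge> m"
    unfolding pdp_def by auto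
  have "min (2 * e1) (N (k - e1 + 1) + e1) \<le> N k" by (rule N_ge) (use k h in auto)
  then show "m \<le> N k" using h by simp
qed

lemma pdp_cong:
  assumes "\<And>j. 1 \<le> j \<Longrightarrow> j < k \<Longrightarrow> g j = h j"
  shows "pdp g k m = pdp h k m"
proof -
  have "\<And>e. 2 \<le> e \<Longrightarrow> e \<le> k \<Longrightarrow> g (k - e + 1) = h (k - e + 1)"
    by (rule assms) auto
  then show ?thesis unfolding pdp_def by (auto simp del: plus_enat_simps)
qed

lemma tab_keep: "j \<le> k \<Longrightarrow> nM_tab f (Suc k) j = nM_tab f k j"
  by simp

lemma tab_main:
  assumes f1: "\<And>k. k \<ge> 2 \<Longrightarrow> f k \<ge> enat (N k)"
  shows "\<forall>j. 1 \<le> j \<and> j \<le> k \<longrightarrow> nM_tab f k j = enat (N j)"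
proof (induction k)
  case 0 then show ?case by simp
next
  case (Suc k)
  show ?case
  proof (cases "k = 0")
    case True then show ?thesis using N_one by (auto simp: le_Suc_eq numeral_eq_enat)
  next
    case False
    have pd: "\<And>m. pdp (nM_tab f k) (Suc k) m = pdp (\<lambda>j. enat (N j)) (Suc k) m"
      by (rule pdp_cong) (use Suc.IH in auto)
    have g: "(GREATEST m. m \<in> {4..2 * Suc k} \<and> pdp (nM_tab f k) (Suc k) m \<noteq> {}) = N (Suc k)"
      unfolding pd using greatest_N[of "Suc k"] False by simp
    have "f (Suc k) \<ge> enat (N (Suc k))" using f1 False by simp
    then have "nM_tab f (Suc k) (Suc k) = enat (N (Suc k))"
      using False g by (simp add: min_def)
    then show ?thesis using Suc.IH False by (auto simp: le_Suc_eq)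
  qed
qed

theorem theorem13p15:
  shows "\<forall>k\<ge>1. nM two_fun k = enat (N k) \<and> nM (\<lambda>k. enat (N k)) k = enat (N k)"
proof (intro allI impI conjI)
  fix k :: nat assume k: "k \<ge> 1"
  show "nM two_fun k = enat (N k)"
    unfolding nM_def using tab_main[of two_fun k] k by (simp add: two_fun_def)
  show "nM (\<lambda>k. enat (N k)) k = enat (N k)"
    unfolding nM_def using tab_main[of "\<lambda>k. enat (N k)" k] k by simp
qed

end
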